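(* For every $\varepsilon>0$ there exists $N$ such that for every $n\ge N$ the following holds: if $V$ is a set of $n$ vertices and $\mathcal{T}$ is a family (multiset, so repeated members are allowed and counted with multiplicity) of triangles on $V$ having no rainbow triangle, then $|\mathcal{T}|\le (1+\varepsilon)\frac{n^2}{8}$. Equivalently, $|\mathcal{T}|\le \frac{n^2}{8}(1+o(1))$ as $n\to\infty$.
   Context: A triangle on $V$ is a $3$-element subset $\{x,y,z\}\subseteq V$, identified with its edge set $\{\{x,y\},\{y,z\},\{x,z\}\}$. In a family (multiset) $\mathcal{T}$ of triangles, repeated copies of the same triangle are treated as different members. A rainbow triangle is a triangle $\{x,y,z\}$ on $V$ together with three distinct members $t_1,t_2,t_3$ of $\mathcal{T}$ (distinct as members of the multiset, though possibly equal as sets) such that $\{x,y\}$ is an edge of $t_1$, $\{y,z\}$ is an edge of $t_2$ and $\{x,z\}$ is an edge of $t_3$. *)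

theory Defs
  imports Complex_Main "HOL-Library.Multiset"
begin

text \<open>A triangle on V: a 3-element subset of V (identified with its edge set).\<close>
definition triangle_on :: "'a set \<Rightarrow> 'a set \<Rightarrow> bool" where
  "triangle_on V t \<longleftrightarrow> t \<subseteq> V \<and> card t = 3"

definition edge_of :: "'a set \<Rightarrow> 'a set \<Rightarrow> bool" where
  "edge_of e t \<longleftrightarrow> e \<subseteq> t \<and> card e = 2"

text \<open>A rainbow triangle in a multiset family T of triangles on V: a triangle {x,y,z} on V
  and three distinct members t1,t2,t3 of T (distinct as members of the multiset, i.e.
  the multiset {#t1,t2,t3#} is contained in T) with xy an edge of t1, yz of t2, xz of t3.\<close>
definition has_rainbow_triangle :: "'a set \<Rightarrow> 'a set multiset \<Rightarrow> bool" where
  "has_rainbow_triangle V T \<longleftrightarrow>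
     (\<exists>x y z t1 t2 t3. triangle_on V {x, y, z} \<and> {#t1, t2, t3#} \<subseteq># T \<and>
        edge_of {x, y} t1 \<and> edge_of {y, z} t2 \<and> edge_of {x, z} t3)"

end

theory Submission
  imports Defs
begin

definition tri :: "'a set set \<Rightarrow> 'a set \<Rightarrow> 'a set set" where
  "tri E V = {S. S \<subseteq> V \<and> card S = 3 \<and> (\<forall>e. e \<subseteq> S \<and> card e = 2 \<longrightarrow> e \<in> E)}"

lemma cross_bound:
  assumes fin: "finite V" and XV: "X \<subseteq> V"
    and Ein: "\<forall>e\<in>E. e \<subseteq> V \<and> card e = 2"
    and nw: "\<And>w x1 x2. w \<in> V - X \<Longrightarrow> x1 \<in> X \<Longrightarrow> x2 \<in> X \<Longrightarrow> {x1,w} \<in> E \<Longrightarrow> {x2,w} \<in> E \<Longrightarrow> x1 = x2"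
  shows "card {e\<in>E. e \<inter> X \<noteq> {} \<and> \<not> e \<subseteq> X} \<le> card (V - X)"
proof -
  let ?C = "{e\<in>E. e \<inter> X \<noteq> {} \<and> \<not> e \<subseteq> X}"
  have key: "\<exists>x w. x \<in> X \<and> w \<in> V - X \<and> e = {x, w}" if "e \<in> ?C" for e
  proof -
    have "e \<in> E" using that by simp
    then have "card e = 2" "e \<subseteq> V" using Ein by auto
    then obtain a b where ab: "e = {a,b}" "a \<noteq> b" "e \<subseteq> V" by (auto simp: card_2_iff)
    with that show ?thesis by auto
  qed
  define g where "g e = the_elem (e - X)" for e
  have gv: "g e \<in> V - X \<and> e = {x, g e}" if "e \<in> ?C" "x \<in> X" "x \<in> e" for e x
  proof -
    from key[OF that(1)] obtain x' w where h: "x' \<in> X" "w \<in> V - X" "e = {x', w}" by blast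
    then have "e - X = {w}" by auto
    then have "g e = w" by (simp add: g_def)
    with h that show ?thesis by auto
  qed
  have "inj_on g ?C"
  proof (rule inj_onI)
    fix e1 e2 assume e1: "e1 \<in> ?C" and e2: "e2 \<in> ?C" and eq: "g e1 = g e2"
    from key[OF e1] obtain x1 w1 where 1: "x1 \<in> X" "w1 \<in> V - X" "e1 = {x1, w1}" by blast
    from key[OF e2] obtain x2 w2 where 2: "x2 \<in> X" "w2 \<in> V - X" "e2 = {x2, w2}" by blast
    have a: "e1 = {x1, g e1}" "g e1 \<in> V - X" using gv[OF e1 1(1)] 1 by auto
    have b: "e2 = {x2, g e2}" using gv[OF e2 2(1)] 2 by auto
    have "x1 = x2" using nw[OF a(2) 1(1) 2(1)] a b eq e1 e2 by auto
    then show "e1 = e2" using a b eq by simp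
  qed
  moreover have "g ` ?C \<subseteq> V - X"
  proof
    fix w assume "w \<in> g ` ?C"
    then obtain e where e: "e \<in> ?C" "w = g e" by blast
    from key[OF e(1)] obtain x w' where "x \<in> X" "w' \<in> V - X" "e = {x, w'}" by blast
    then show "w \<in> V - X" using gv[OF e(1)] e by auto
  qed
  ultimately show ?thesis using fin by (meson card_inj_on_le finite_Diff)
qed

lemma sub2:
  assumes "e \<subseteq> {a,b,c}" "card e = 2"
  shows "e = {a,b} \<or> e = {a,c} \<or> e = {b,c}"
proof -
  from assms(2) obtain x y where xy: "e = {x,y}" "x \<noteq> y" by (auto simp: card_2_iff)
  with assms(1) show ?thesis by auto
qed

lemma card_in_le:
  assumes "finite X" "\<forall>e\<in>E. card e = 2"
  shows "card {e\<in>E. e \<subseteq> X} \<le> card X choose 2"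
proof -
  have "{e\<in>E. e \<subseteq> X} \<subseteq> {B. B \<subseteq> X \<and> card B = 2}" using assms by auto
  moreover have "finite {B. B \<subseteq> X \<and> card B = 2}" using assms(1) by simp
  ultimately have "card {e\<in>E. e \<subseteq> X} \<le> card {B. B \<subseteq> X \<and> card B = 2}" by (rule card_mono[rotated])
  also have "\<dots> = card X choose 2" using n_subsets[OF assms(1)] by simp
  finally show ?thesis .
qed

lemma tri_intro:
  assumes "x1 \<noteq> x2" "x1 \<noteq> w" "x2 \<noteq> w" "{x1,x2} \<in> E" "{x1,w} \<in> E" "{x2,w} \<in> E"
    "x1 \<in> V" "x2 \<in> V" "w \<in> V"
  shows "{x1,x2,w} \<in> tri E V"
  unfolding tri_def
proof (intro CollectI conjI allI impI)
  show "{x1,x2,w} \<subseteq> V" using assms by auto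
  show "card {x1,x2,w} = 3" using assms by auto
  fix e assume "e \<subseteq> {x1,x2,w} \<and> card e = 2"
  then have "e = {x1,x2} \<or> e = {x1,w} \<or> e = {x2,w}" using sub2[of e x1 x2 w] by simp
  then show "e \<in> E" using assms(4-6) by (elim disjE) simp_all
qed

lemma tri_restrict:
  assumes "\<forall>e\<in>E. e \<subseteq> V \<and> card e = 2"
  shows "tri {e\<in>E. e \<subseteq> V - Y} (V - Y) = {S \<in> tri E V. S \<subseteq> V - Y}"
  using assms unfolding tri_def by blast

lemma three_sub2:
  assumes "card S = 3"
  shows "\<exists>e. e \<subseteq> S \<and> card e = 2"
proof -
  from assms obtain a b c where "S = {a,b,c}" "a \<noteq> b" by (auto simp: card_3_iff)
  then show ?thesis by (intro exI[of _ "{a,b}"]) auto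
qed

lemma graph_bound:
  assumes "finite V" "\<forall>e\<in>E. e \<subseteq> V \<and> card e = 2"
    "\<forall>e\<in>E. \<forall>S1\<in>tri E V. \<forall>S2\<in>tri E V. e \<subseteq> S1 \<longrightarrow> e \<subseteq> S2 \<longrightarrow> S1 = S2"
  shows "4 * (card E + card (tri E V)) \<le> card V ^ 2 + 4 * card V"
  using assms
proof (induction "card V" arbitrary: V E rule: less_induct)
  case less
  note fin = less.prems(1) and Ein = less.prems(2) and uniq = less.prems(3)
  define n where "n = card V"
  have finE: "finite E" using Ein fin by (metis Pow_iff finite_Pow_iff rev_finite_subset subsetI)
  have fintri: "finite (tri E V)" using fin unfolding tri_def
    by (metis (no_types, lifting) Pow_iff finite_Pow_iff mem_Collect_eq rev_finite_subset subsetI)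
  have step: "4 * (card {e\<in>E. e \<subseteq> V - X} + card (tri {e\<in>E. e \<subseteq> V - X} (V - X)))
      \<le> card (V - X) ^ 2 + 4 * card (V - X)" if "X \<subseteq> V" "X \<noteq> {}" for X
  proof -
    have "V - X \<subset> V" using that by blast
    then have "card (V - X) < card V" using fin by (rule psubset_card_mono[rotated])
    then show ?thesis
    proof (rule less.hyps)
      show "finite (V - X)" using fin by simp
      show "\<forall>e\<in>{e\<in>E. e \<subseteq> V - X}. e \<subseteq> V - X \<and> card e = 2" using Ein by auto
      show "\<forall>e\<in>{e\<in>E. e \<subseteq> V - X}. \<forall>S1\<in>tri {e\<in>E. e \<subseteq> V - X} (V - X).
          \<forall>S2\<in>tri {e\<in>E. e \<subseteq> V - X} (V - X). e \<subseteq> S1 \<longrightarrow> e \<subseteq> S2 \<longrightarrow> S1 = S2"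
        using uniq tri_restrict[OF Ein, of X] by auto
    qed
  qed
  have split: "E = {e\<in>E. e \<subseteq> V - X} \<union> {e\<in>E. e \<subseteq> X} \<union> {e\<in>E. e \<inter> X \<noteq> {} \<and> \<not> e \<subseteq> X}" for X
    using Ein by blast
  have cardE: "card E \<le> card {e\<in>E. e \<subseteq> V - X} + card {e\<in>E. e \<subseteq> X} + card {e\<in>E. e \<inter> X \<noteq> {} \<and> \<not> e \<subseteq> X}" for X
    by (metis (no_types, lifting) split card_Un_le le_trans add_le_mono1)
  show ?case
  proof (cases "tri E V = {}")
    case False
    then obtain X where X: "X \<in> tri E V" by blast
    then have XV: "X \<subseteq> V" and cX: "card X = 3" and Xe: "\<And>e. e \<subseteq> X \<Longrightarrow> card e = 2 \<Longrightarrow> e \<in> E"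
      unfolding tri_def by auto
    have finX: "finite X" using XV fin finite_subset by blast
    have Xne: "X \<noteq> {}" using cX by auto
    have cVX: "card (V - X) = n - 3" using XV fin cX by (simp add: card_Diff_subset finite_subset n_def)
    have n3: "n \<ge> 3" unfolding n_def using card_mono[OF fin XV] cX by simp
    have In: "card {e\<in>E. e \<subseteq> X} \<le> 3" using card_in_le[OF finX, of E] Ein cX by (simp add: choose_two)
    have nw: "x1 = x2" if "w \<in> V - X" "x1 \<in> X" "x2 \<in> X" "{x1,w} \<in> E" "{x2,w} \<in> E" for w x1 x2
    proof (rule ccontr)
      assume ne: "x1 \<noteq> x2"
      have e12: "{x1,x2} \<in> E" using Xe[of "{x1,x2}"] that ne by auto
      have T: "{x1,x2,w} \<in> tri E V"
        by (rule tri_intro) (use that ne e12 XV in auto)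
      have "{x1,x2,w} = X" using uniq e12 T X by (metis insert_mono empty_subsetI insert_subset that(2,3))
      then show False using that by auto
    qed
    have C: "card {e\<in>E. e \<inter> X \<noteq> {} \<and> \<not> e \<subseteq> X} \<le> n - 3"
      using cross_bound[OF fin XV Ein nw] cVX by simp
    define C where "C = {e\<in>E. e \<inter> X \<noteq> {} \<and> \<not> e \<subseteq> X}"
    define L0 where "L0 = {S\<in>tri E V. S \<inter> X \<noteq> {}} - {X}"
    define cr where "cr S = {e. e \<subseteq> S \<and> card e = 2 \<and> e \<inter> X \<noteq> {} \<and> \<not> e \<subseteq> X}" for S
    have crS: "card (cr S) = 2 \<and> cr S \<subseteq> C" if S: "S \<in> L0" for S
    proof -
      from S have St: "S \<in> tri E V" and SX: "S \<inter> X \<noteq> {}" and SnX: "S \<noteq> X" unfolding L0_def by auto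
      from St have SV: "S \<subseteq> V" and cS: "card S = 3" and Se: "\<And>e. e \<subseteq> S \<Longrightarrow> card e = 2 \<Longrightarrow> e \<in> E"
        unfolding tri_def by auto
      from SX obtain x where x: "x \<in> S" "x \<in> X" by blast
      have one: "y = x" if "y \<in> S" "y \<in> X" for y
      proof (rule ccontr)
        assume "y \<noteq> x"
        then have "{x,y} \<in> E" "{x,y} \<subseteq> S" "{x,y} \<subseteq> X" using Xe[of "{x,y}"] x that by auto
        then have "S = X" using uniq St X by blast
        then show False using SnX by simp
      qed
      have "card (S - {x}) = 2" using cS x by (simp add: card_Diff_singleton_if finite_subset fin SV)
      then obtain w w' where ww: "S - {x} = {w,w'}" "w \<noteq> w'" by (auto simp: card_2_iff)
      have Seq: "S = {x,w,w'}" using ww x by blast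
      have wX: "w \<notin> X" "w' \<notin> X" "w \<noteq> x" "w' \<noteq> x" using one ww Seq by blast+
      have "cr S = {{x,w},{x,w'}}"
      proof
        show "cr S \<subseteq> {{x,w},{x,w'}}"
        proof
          fix e assume "e \<in> cr S"
          then have "e \<subseteq> {x,w,w'}" "card e = 2" "e \<inter> X \<noteq> {}" unfolding cr_def Seq by auto
          then show "e \<in> {{x,w},{x,w'}}" using sub2[of e x w w'] wX by auto
        qed
        show "{{x,w},{x,w'}} \<subseteq> cr S" unfolding cr_def Seq using wX x ww by auto
      qed
      moreover have "{x,w} \<noteq> {x,w'}" using ww wX by (metis doubleton_eq_iff)
      moreover have "cr S \<subseteq> C" unfolding cr_def C_def using Se by auto
      ultimately show ?thesis by simp
    qed
    have disj: "cr S1 \<inter> cr S2 = {}" if "S1 \<in> L0" "S2 \<in> L0" "S1 \<noteq> S2" for S1 S2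
    proof (rule ccontr)
      assume "cr S1 \<inter> cr S2 \<noteq> {}"
      then obtain e where "e \<in> cr S1" "e \<in> cr S2" by blast
      moreover have "e \<in> E" using calculation crS that unfolding C_def by blast
      ultimately show False using uniq that unfolding cr_def L0_def by blast
    qed
    have finL0: "finite L0" unfolding L0_def using fintri by simp
    have "card (\<Union>S\<in>L0. cr S) = (\<Sum>S\<in>L0. card (cr S))"
      by (rule card_UN_disjoint[OF finL0]) (use crS disj in \<open>auto intro: finite_subset simp: card_ge_0_finite\<close>)
    also have "\<dots> = 2 * card L0" using crS by simp
    finally have "2 * card L0 = card (\<Union>S\<in>L0. cr S)" by simp
    also have "\<dots> \<le> card C"
      by (rule card_mono) (use finE crS in \<open>auto simp: C_def\<close>)
    finally have L0b: "2 * card L0 \<le> n - 3" using C C_def by simp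
    have trisplit: "tri E V \<subseteq> {S \<in> tri E V. S \<subseteq> V - X} \<union> insert X L0"
      unfolding L0_def tri_def by blast
    have "card (tri E V) \<le> card ({S \<in> tri E V. S \<subseteq> V - X} \<union> insert X L0)"
      by (rule card_mono[OF _ trisplit]) (use finL0 fintri in simp)
    also have "\<dots> \<le> card {S \<in> tri E V. S \<subseteq> V - X} + card (insert X L0)"
      by (rule card_Un_le)
    also have "\<dots> \<le> card {S \<in> tri E V. S \<subseteq> V - X} + card L0 + 1"
      using card_insert_le_m1 by (simp add: card_insert_if finL0)
    finally have ctri: "card (tri E V) \<le> card (tri {e\<in>E. e \<subseteq> V - X} (V - X)) + card L0 + 1"
      using tri_restrict[OF Ein, of X] by simp
    have IH: "4 * (card {e\<in>E. e \<subseteq> V - X} + card (tri {e\<in>E. e \<subseteq> V - X} (V - X)))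
      \<le> (n-3) ^ 2 + 4 * (n-3)" using step[OF XV Xne] cVX by simp
    have cE: "card E \<le> card {e\<in>E. e \<subseteq> V - X} + 3 + (n - 3)" using cardE[of X] In C by simp
    obtain m where m: "n = m + 3" using n3 by (metis add.commute le_Suc_ex)
    show ?thesis unfolding n_def[symmetric] using IH cE ctri L0b unfolding m
      by (simp add: power2_eq_square algebra_simps)
  next
    case True
    show ?thesis
    proof (cases "E = {}")
      case True
      then show ?thesis using \<open>tri E V = {}\<close> by simp
    next
      case False
      then obtain e where e: "e \<in> E" by blast
      with Ein obtain u v where uv: "e = {u,v}" "u \<noteq> v" "u \<in> V" "v \<in> V" by (auto simp: card_2_iff)
      define X where "X = {u,v}"
      have XV: "X \<subseteq> V" using uv X_def by auto
      have cX: "card X = 2" using uv X_def by simp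
      have finX: "finite X" using X_def by simp
      have cVX: "card (V - X) = n - 2" using XV fin cX by (simp add: card_Diff_subset finite_subset n_def)
      have n2: "n \<ge> 2" unfolding n_def using card_mono[OF fin XV] cX by simp
      have In: "card {e\<in>E. e \<subseteq> X} \<le> 1" using card_in_le[OF finX, of E] Ein cX by (simp add: choose_two)
      have nw: "x1 = x2" if "w \<in> V - X" "x1 \<in> X" "x2 \<in> X" "{x1,w} \<in> E" "{x2,w} \<in> E" for w x1 x2
      proof (rule ccontr)
        assume ne: "x1 \<noteq> x2"
        have "{x1,x2} = {u,v}" using that(2,3) ne X_def by auto
        then have e12: "{x1,x2} \<in> E" using e uv by simp
        have T: "{x1,x2,w} \<in> tri E V"
          by (rule tri_intro) (use that ne e12 XV in auto)
        then show False using \<open>tri E V = {}\<close> by simp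
      qed
      have C: "card {e\<in>E. e \<inter> X \<noteq> {} \<and> \<not> e \<subseteq> X} \<le> n - 2"
        using cross_bound[OF fin XV Ein nw] cVX by simp
      have IH: "4 * card {e\<in>E. e \<subseteq> V - X} \<le> (n-2) ^ 2 + 4 * (n-2)"
        using step[of X] XV cVX X_def by simp
      have cE: "card E \<le> card {e\<in>E. e \<subseteq> V - X} + 1 + (n - 2)" using cardE[of X] In C by simp
      obtain m where m: "n = m + 2" using n2 by (metis add.commute le_Suc_ex)
      show ?thesis unfolding n_def[symmetric] using IH cE \<open>tri E V = {}\<close> unfolding m
        by (simp add: power2_eq_square algebra_simps)
    qed
  qed
qed


definition priv :: "'a set multiset \<Rightarrow> 'a set \<Rightarrow> 'a set set" where
  "priv T S = {e. e \<subseteq> S \<and> card e = 2 \<and> (\<forall>S'\<in>#T. e \<subseteq> S' \<longrightarrow> S' = S)}"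

lemma rainbowI:
  assumes "a \<noteq> b" "b \<noteq> c" "a \<noteq> c" "{a,b,c} \<subseteq> V" "{#A,B,C#} \<subseteq># T"
    "{a,b} \<subseteq> A" "{b,c} \<subseteq> B" "{a,c} \<subseteq> C"
  shows "has_rainbow_triangle V T"
  unfolding has_rainbow_triangle_def
proof (intro exI conjI)
  show "triangle_on V {a,b,c}" unfolding triangle_on_def using assms by auto
  show "{#A,B,C#} \<subseteq># T" by fact
  show "edge_of {a,b} A" "edge_of {b,c} B" "edge_of {a,c} C" unfolding edge_of_def using assms by auto
qed

lemma msub3: "A \<in># T \<Longrightarrow> B \<in># T \<Longrightarrow> C \<in># T \<Longrightarrow> A \<noteq> B \<Longrightarrow> B \<noteq> C \<Longrightarrow> A \<noteq> C \<Longrightarrow> {#A,B,C#} \<subseteq># T"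
  unfolding subseteq_mset_def by (auto simp: count_add_mset)

lemma msub2: "A \<in># T \<Longrightarrow> A \<noteq> S \<Longrightarrow> count T S \<ge> 2 \<Longrightarrow> {#A,S,S#} \<subseteq># T"
  unfolding subseteq_mset_def by (auto simp: count_add_mset)

lemma msub1: "count T S \<ge> 3 \<Longrightarrow> {#S,S,S#} \<subseteq># T"
  unfolding subseteq_mset_def by (auto simp: count_add_mset)

lemma edge1:
  assumes "card S = 3" "e \<subseteq> S" "card e = 2"
  shows "\<exists>a b c. a \<noteq> b \<and> b \<noteq> c \<and> a \<noteq> c \<and> S = {a,b,c} \<and> e = {a,b}"
proof -
  from assms(3) obtain a b where ab: "e = {a,b}" "a \<noteq> b" by (auto simp: card_2_iff)
  have fS: "finite S" using assms(1) by (metis card.infinite zero_neq_numeral)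
  have "card (S - e) = 1" using assms fS by (simp add: card_Diff_subset finite_subset)
  then obtain c where c: "S - e = {c}" by (auto simp: card_1_singleton_iff)
  have "S = e \<union> (S - e)" using assms(2) by blast
  also have "\<dots> = {a,b} \<union> {c}" using c ab by simp
  finally have "S = {a,b,c}" by (simp add: insert_commute)
  moreover have "c \<noteq> a" "c \<noteq> b" using c ab by auto
  ultimately show ?thesis using ab by (intro exI[of _ a] exI[of _ b] exI[of _ c]) simp
qed

lemma edge2:
  assumes "card S = 3" "e1 \<subseteq> S" "card e1 = 2" "e2 \<subseteq> S" "card e2 = 2" "e1 \<noteq> e2"
  shows "\<exists>a b c. a \<noteq> b \<and> b \<noteq> c \<and> a \<noteq> c \<and> S = {a,b,c} \<and> e1 = {a,b} \<and> e2 = {b,c}"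
proof -
  from edge1[OF assms(1-3)] obtain a b c where abc: "a \<noteq> b" "b \<noteq> c" "a \<noteq> c" "S = {a,b,c}" "e1 = {a,b}"
    by blast
  have "e2 = {a,b} \<or> e2 = {a,c} \<or> e2 = {b,c}" using sub2[of e2 a b c] assms(4,5) abc(4) by simp
  then have "e2 = {a,c} \<or> e2 = {b,c}" using abc(5) assms(6) by blast
  then show ?thesis
  proof
    assume "e2 = {a,c}"
    then show ?thesis using abc
      by (intro exI[of _ b] exI[of _ a] exI[of _ c]) (simp add: insert_commute)
  next
    assume "e2 = {b,c}"
    then show ?thesis using abc by blast
  qed
qed

definition EE :: "'a set multiset \<Rightarrow> 'a set set" where
  "EE T = (\<Union>S\<in>set_mset T. priv T S)"

lemma card3_eq: "S \<subseteq> A \<Longrightarrow> card S = 3 \<Longrightarrow> card A = 3 \<Longrightarrow> S = A"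
  by (metis card_subset_eq card.infinite zero_neq_numeral)

locale fam =
  fixes V :: "'a set" and T :: "'a set multiset"
  assumes tri: "\<forall>t\<in>#T. triangle_on V t" and nr: "\<not> has_rainbow_triangle V T"
begin

lemma memD: "S \<in># T \<Longrightarrow> S \<subseteq> V \<and> card S = 3"
  using tri unfolding triangle_on_def by auto

lemma count_le2: "S \<in># T \<Longrightarrow> count T S \<le> 2"
proof (rule ccontr)
  assume S: "S \<in># T" and "\<not> count T S \<le> 2"
  then have m: "{#S,S,S#} \<subseteq># T" by (intro msub1) simp
  from memD[OF S] obtain a b c where "S = {a,b,c}" "a \<noteq> b" "b \<noteq> c" "a \<noteq> c"
    by (auto simp: card_3_iff)
  with memD[OF S] have "has_rainbow_triangle V T" by (intro rainbowI[OF _ _ _ _ m]) auto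
  with nr show False by simp
qed

lemma two_nonpriv:
  assumes S: "S \<in># T" and e1: "e1 \<subseteq> S" "card e1 = 2" and e2: "e2 \<subseteq> S" "card e2 = 2" and ne: "e1 \<noteq> e2"
    and np1: "e1 \<notin> priv T S" and np2: "e2 \<notin> priv T S"
  shows False
proof -
  from np1 e1 obtain S1 where S1: "S1 \<in># T" "e1 \<subseteq> S1" "S1 \<noteq> S" unfolding priv_def by blast
  from np2 e2 obtain S2 where S2: "S2 \<in># T" "e2 \<subseteq> S2" "S2 \<noteq> S" unfolding priv_def by blast
  from edge2[OF memD[OF S, THEN conjunct2] e1 e2 ne] obtain a b c where
    abc: "a \<noteq> b" "b \<noteq> c" "a \<noteq> c" "S = {a,b,c}" "e1 = {a,b}" "e2 = {b,c}" by blast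
  have "S1 \<noteq> S2"
  proof
    assume "S1 = S2"
    then have "S \<subseteq> S1" using S1 S2 abc by auto
    moreover have "card S1 = 3" "card S = 3" using memD S1(1) S by auto
    ultimately have "S = S1" by (metis card_subset_eq card.infinite zero_neq_numeral)
    then show False using S1 by simp
  qed
  then have m: "{#S1,S2,S#} \<subseteq># T" using msub3 S1 S2 S by metis
  have "has_rainbow_triangle V T"
    by (rule rainbowI[OF abc(1-3) _ m]) (use abc S1 S2 memD[OF S] in auto)
  with nr show False by simp
qed

lemma dbl_priv:
  assumes S: "S \<in># T" and c2: "count T S \<ge> 2" and e: "e \<subseteq> S" "card e = 2"
  shows "e \<in> priv T S"
proof (rule ccontr)
  assume "e \<notin> priv T S"
  with e obtain S1 where S1: "S1 \<in># T" "e \<subseteq> S1" "S1 \<noteq> S" unfolding priv_def by blast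
  from edge1[OF memD[OF S, THEN conjunct2] e] obtain a b c where
    abc: "a \<noteq> b" "b \<noteq> c" "a \<noteq> c" "S = {a,b,c}" "e = {a,b}" by blast
  have m: "{#S1,S,S#} \<subseteq># T" using msub2 S1 c2 by metis
  have "has_rainbow_triangle V T"
    by (rule rainbowI[OF abc(1-3) _ m]) (use abc S1 memD[OF S] in auto)
  with nr show False by simp
qed



lemma K:
  assumes St: "S \<in> tri (EE T) V"
  shows "S \<in># T"
proof -
  from St have SV: "S \<subseteq> V" and cS: "card S = 3" and Se: "\<And>e. e \<subseteq> S \<Longrightarrow> card e = 2 \<Longrightarrow> e \<in> EE T"
    unfolding tri_def by auto
  from cS obtain a b c where abc: "S = {a,b,c}" "a \<noteq> b" "b \<noteq> c" "a \<noteq> c" by (auto simp: card_3_iff)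
  have own: "\<exists>A. A \<in># T \<and> e \<subseteq> A" if "e \<subseteq> S" "card e = 2" for e
  proof -
    have "e \<in> EE T" using Se that by blast
    then obtain A where "A \<in># T" "e \<in> priv T A" unfolding EE_def by blast
    then show ?thesis unfolding priv_def by blast
  qed
  obtain A where A: "A \<in># T" "{a,b} \<subseteq> A" using own[of "{a,b}"] abc by auto
  obtain B where B: "B \<in># T" "{b,c} \<subseteq> B" using own[of "{b,c}"] abc by auto
  obtain C where C: "C \<in># T" "{a,c} \<subseteq> C" using own[of "{a,c}"] abc by auto
  show ?thesis
  proof (cases "A = B \<or> A = C \<or> B = C")
    case True
    have "\<exists>D. D \<in># T \<and> S \<subseteq> D"
      using True
    proof (elim disjE)
      assume "A = B" then show ?thesis using A B abc by (intro exI[of _ A]) auto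
    next
      assume "A = C" then show ?thesis using A C abc by (intro exI[of _ A]) auto
    next
      assume "B = C" then show ?thesis using B C abc by (intro exI[of _ B]) auto
    qed
    then obtain D where D: "D \<in># T" "S \<subseteq> D" by blast
    have "S = D" using card3_eq[OF D(2) cS] memD[OF D(1)] by simp
    then show ?thesis using D by simp
  next
    case False
    then have m: "{#A,B,C#} \<subseteq># T" using msub3 A B C by metis
    have "has_rainbow_triangle V T"
      by (rule rainbowI[OF abc(2) abc(3) abc(4) _ m]) (use abc SV A B C in auto)
    with nr show ?thesis by simp
  qed
qed

definition allp :: "'a set \<Rightarrow> bool" where "allp S \<longleftrightarrow> (\<forall>e. e \<subseteq> S \<and> card e = 2 \<longrightarrow> e \<in> priv T S)"

lemma tri_eq: "tri (EE T) V = {S \<in> set_mset T. allp S}"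
proof
  show "tri (EE T) V \<subseteq> {S \<in> set_mset T. allp S}"
  proof
    fix S assume St: "S \<in> tri (EE T) V"
    have ST: "S \<in># T" using K[OF St] .
    have "e \<in> priv T S" if "e \<subseteq> S" "card e = 2" for e
    proof -
      have "e \<in> EE T" using St that unfolding tri_def by auto
      then obtain A where "A \<in># T" "e \<in> priv T A" unfolding EE_def by blast
      then have "S = A" using ST that unfolding priv_def by blast
      then show ?thesis using \<open>e \<in> priv T A\<close> by simp
    qed
    then show "S \<in> {S \<in> set_mset T. allp S}" using ST unfolding allp_def by auto
  qed
  show "{S \<in> set_mset T. allp S} \<subseteq> tri (EE T) V"
  proof
    fix S assume "S \<in> {S \<in> set_mset T. allp S}"
    then have ST: "S \<in># T" and al: "allp S" by auto
    have "e \<in> EE T" if "e \<subseteq> S" "card e = 2" for e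
      using al that ST unfolding allp_def EE_def by blast
    then show "S \<in> tri (EE T) V" unfolding tri_def
      using memD[OF ST] by blast
  qed
qed

lemma per_S:
  assumes ST: "S \<in># T"
  shows "2 * count T S \<le> card (priv T S) + (if allp S then 1 else 0)"
proof -
  define ES where "ES = {e. e \<subseteq> S \<and> card e = 2}"
  have cS: "card S = 3" using memD[OF ST] by simp
  have fS: "finite S" using cS by (metis card.infinite zero_neq_numeral)
  have cES: "card ES = 3" unfolding ES_def using n_subsets[OF fS, of 2] cS by (simp add: choose_two)
  have finES: "finite ES" unfolding ES_def using fS by simp
  have pES: "priv T S \<subseteq> ES" unfolding ES_def priv_def by auto
  have c2: "count T S \<le> 2" using count_le2[OF ST] .
  show ?thesis
  proof (cases "allp S")
    case True
    then have "priv T S = ES" using pES unfolding allp_def ES_def by auto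
    then show ?thesis using cES c2 True by simp
  next
    case False
    then obtain e0 where e0: "e0 \<subseteq> S" "card e0 = 2" "e0 \<notin> priv T S" unfolding allp_def by blast
    have c1: "count T S \<le> 1"
    proof (rule ccontr)
      assume "\<not> count T S \<le> 1"
      then have "count T S \<ge> 2" by simp
      then have "e0 \<in> priv T S" using dbl_priv[OF ST _ e0(1,2)] by simp
      then show False using e0 by simp
    qed
    have "ES - priv T S \<subseteq> {e0}"
    proof
      fix e assume e: "e \<in> ES - priv T S"
      show "e \<in> {e0}"
      proof (rule ccontr)
        assume "e \<notin> {e0}"
        then have "e \<noteq> e0" by simp
        moreover have "e \<subseteq> S" "card e = 2" "e \<notin> priv T S" using e unfolding ES_def by auto
        ultimately show False using two_nonpriv[OF ST _ _ e0(1,2)] e0(3) by blast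
      qed
    qed
    then have "card (ES - priv T S) \<le> 1" using card_mono[of "{e0}" "ES - priv T S"] by simp
    moreover have "card (ES - priv T S) = card ES - card (priv T S)"
      using card_Diff_subset[OF finite_subset[OF pES finES] pES] .
    moreover have "card (priv T S) \<le> card ES" using card_mono[OF finES pES] .
    ultimately have "card (priv T S) \<ge> 2" using cES by linarith
    then show ?thesis using c1 False by simp
  qed
qed

lemma main_count: "2 * size T \<le> card (EE T) + card (tri (EE T) V)"
proof -
  have finp: "finite (priv T S)" if "S \<in># T" for S
  proof -
    have "finite S" using memD[OF that] by (metis card.infinite zero_neq_numeral)
    then have "finite (Pow S)" by simp
    moreover have "priv T S \<subseteq> Pow S" unfolding priv_def by blast
    ultimately show ?thesis by (rule finite_subset[rotated])
  qed
  have cE: "card (EE T) = (\<Sum>S\<in>set_mset T. card (priv T S))"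
    unfolding EE_def
  proof (rule card_UN_disjoint)
    show "finite (set_mset T)" by simp
    show "\<forall>i\<in>set_mset T. finite (priv T i)" using finp by blast
    show "\<forall>i\<in>set_mset T. \<forall>j\<in>set_mset T. i \<noteq> j \<longrightarrow> priv T i \<inter> priv T j = {}"
    proof (intro ballI impI)
      fix i j assume ij: "i \<in> set_mset T" "j \<in> set_mset T" "i \<noteq> j"
      show "priv T i \<inter> priv T j = {}"
      proof (rule ccontr)
        assume "priv T i \<inter> priv T j \<noteq> {}"
        then obtain e where e: "e \<in> priv T i" "e \<in> priv T j" by blast
        then have "e \<subseteq> j" unfolding priv_def by simp
        then have "j = i" using e(1) ij(2) unfolding priv_def by simp
        then show False using ij by simp
      qed
    qed
  qed
  have cT: "card (tri (EE T) V) = (\<Sum>S\<in>set_mset T. if allp S then 1 else 0)"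
  proof -
    have "card {S \<in> set_mset T. allp S} = sum (\<lambda>_. 1) {S \<in> set_mset T. allp S}" by (rule card_eq_sum)
    also have "\<dots> = (\<Sum>S\<in>set_mset T. if allp S then 1 else 0)" by (rule sum.inter_filter) simp
    finally show ?thesis unfolding tri_eq .
  qed
  have sT: "size T = (\<Sum>S\<in>set_mset T. count T S)"
    by (rule size_multiset_overloaded_eq)
  have "2 * size T = (\<Sum>S\<in>set_mset T. 2 * count T S)" unfolding sT by (simp add: sum_distrib_left)
  also have "\<dots> \<le> (\<Sum>S\<in>set_mset T. card (priv T S) + (if allp S then 1 else 0))"
    by (rule sum_mono) (use per_S in simp)
  also have "\<dots> = card (EE T) + card (tri (EE T) V)" unfolding cE cT by (simp add: sum.distrib)
  finally show ?thesis .
qed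

end

theorem theorem3p1:
  shows "\<forall>\<epsilon>::real. \<epsilon> > 0 \<longrightarrow> (\<exists>N::nat. \<forall>n\<ge>N. \<forall>(V::nat set) (T::nat set multiset).
     finite V \<and> card V = n \<and> (\<forall>t\<in>#T. triangle_on V t) \<and> \<not> has_rainbow_triangle V T
       \<longrightarrow> real (size T) \<le> (1 + \<epsilon>) * (real n)^2 / 8)"
proof (intro allI impI)
  fix \<epsilon> :: real assume ep: "\<epsilon> > 0"
  show "\<exists>N::nat. \<forall>n\<ge>N. \<forall>(V::nat set) (T::nat set multiset).
     finite V \<and> card V = n \<and> (\<forall>t\<in>#T. triangle_on V t) \<and> \<not> has_rainbow_triangle V T
       \<longrightarrow> real (size T) \<le> (1 + \<epsilon>) * (real n)^2 / 8"
  proof (intro exI[of _ "nat \<lceil>4 / \<epsilon>\<rceil>"] allI impI)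
    fix n :: nat and V :: "nat set" and T :: "nat set multiset"
    assume nN: "nat \<lceil>4 / \<epsilon>\<rceil> \<le> n"
      and H: "finite V \<and> card V = n \<and> (\<forall>t\<in>#T. triangle_on V t) \<and> \<not> has_rainbow_triangle V T"
    from H have finV: "finite V" and cV: "card V = n" by auto
    interpret fam V T
    proof
      show "\<forall>t\<in>#T. triangle_on V t" using H by blast
      show "\<not> has_rainbow_triangle V T" using H by blast
    qed
    have h1: "2 * size T \<le> card (EE T) + card (tri (EE T) V)" by (rule main_count)
    have Ein: "\<forall>e\<in>EE T. e \<subseteq> V \<and> card e = 2"
    proof
      fix e assume "e \<in> EE T"
      then obtain A where A: "A \<in># T" "e \<in> priv T A" unfolding EE_def by blast
      from A(2) have "e \<subseteq> A \<and> card e = 2" by (simp add: priv_def)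
      then show "e \<subseteq> V \<and> card e = 2" using memD[OF A(1)] by blast
    qed
    have uq: "\<forall>e\<in>EE T. \<forall>S1\<in>tri (EE T) V. \<forall>S2\<in>tri (EE T) V. e \<subseteq> S1 \<longrightarrow> e \<subseteq> S2 \<longrightarrow> S1 = S2"
    proof (intro ballI impI)
      fix e S1 S2 assume e: "e \<in> EE T" and S: "S1 \<in> tri (EE T) V" "S2 \<in> tri (EE T) V"
        and sub: "e \<subseteq> S1" "e \<subseteq> S2"
      from e obtain A where A: "A \<in># T" "e \<in> priv T A" unfolding EE_def by blast
      from A(2) have own: "\<And>S'. S' \<in># T \<Longrightarrow> e \<subseteq> S' \<Longrightarrow> S' = A" by (simp add: priv_def)
      have "S1 = A" by (rule own[OF K[OF S(1)] sub(1)])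
      moreover have "S2 = A" by (rule own[OF K[OF S(2)] sub(2)])
      ultimately show "S1 = S2" by simp
    qed
    have h2: "4 * (card (EE T) + card (tri (EE T) V)) \<le> card V ^ 2 + 4 * card V"
      by (rule graph_bound[OF finV Ein uq])
    have h3: "8 * size T \<le> n ^ 2 + 4 * n" proof -
      have "8 * size T \<le> 4 * (card (EE T) + card (tri (EE T) V))" using h1 by simp
      also have "\<dots> \<le> n ^ 2 + 4 * n" using h2 unfolding cV .
      finally show ?thesis .
    qed
    then have "real (8 * size T) \<le> real (n ^ 2 + 4 * n)" by (simp only: of_nat_le_iff)
    then have r3: "8 * real (size T) \<le> (real n) ^ 2 + 4 * real n" by simp
    have "4 / \<epsilon> > 0" using ep by simp
    then have cpos: "\<lceil>4 / \<epsilon>\<rceil> \<ge> 0" by (meson ceiling_le_zero le_less_linear less_imp_le not_le)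
    have "real (nat \<lceil>4 / \<epsilon>\<rceil>) \<le> real n" using nN by (simp only: of_nat_le_iff)
    then have "4 / \<epsilon> \<le> real n" using cpos by simp
    then have "4 \<le> \<epsilon> * real n" using ep by (simp add: divide_le_eq mult.commute)
    then have "4 * real n \<le> \<epsilon> * real n * real n" by (simp add: mult_right_mono)
    then have "8 * real (size T) \<le> (1 + \<epsilon>) * (real n) ^ 2" using r3
      by (simp add: power2_eq_square algebra_simps)
    then show "real (size T) \<le> (1 + \<epsilon>) * (real n)^2 / 8" by simp
  qed
qed

end
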